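(* Let $T, L, \ell$ be positive integers and let $\underline{C}, \overline{C}, \overline{V}, V$ be real numbers. Let $\mathcal{TK}=\{(t,k): t\in[1,T]_{\mathbb{Z}},\ k\in[\min\{t+L-1,T\},T]_{\mathbb{Z}}\}$. Consider the polytope $P$ in the variables $\alpha_t$ ($t\in[1,T]_{\mathbb{Z}}$), $\beta_{tk}$ ($(t,k)\in\mathcal{TK}$), $\gamma_{tk}$ ($t\in[L,T-\ell-1]_{\mathbb{Z}}$, $k\in[t+\ell+1,T]_{\mathbb{Z}}$), $\theta_t$ ($t\in[T-\ell,T]_{\mathbb{Z}}$) and $q^s_{tk}$ ($(t,k)\in\mathcal{TK}$, $s\in[t,k]_{\mathbb{Z}}$) defined by \begin{align*} &\textstyle\sum_{t=1}^{T}\alpha_t\le 1,\\ &\textstyle -\alpha_t+\sum_{k=t+L-1}^{T}\beta_{tk}-\sum_{k=L}^{t-\ell-1}\gamma_{kt}=0, && \forall t\in[1,T]_{\mathbb{Z}},\\ &\textstyle -\sum_{k=1}^{t-L+1}\beta_{kt}+\sum_{k=t+\ell+1}^{T}\gamma_{tk}\le 0, && \forall t\in[L,T-\ell-1]_{\mathbb{Z}},\\ &\textstyle \theta_t-\sum_{k=1}^{t-L+1}\beta_{kt}=0, && \forall t\in[T-\ell,T]_{\mathbb{Z}},\\ &\underline{C}\beta_{tk}\le q^s_{tk}\le \overline{C}\beta_{tk}, && \forall s\in[t,k]_{\mathbb{Z}},\ (t,k)\in\mathcal{TK},\\ &q^t_{tk}\le \overline{V}\beta_{tk}, && \forall (t,k)\in\mathcal{TK},\\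 &q^k_{tk}\le \overline{V}\beta_{tk}, && \forall (t,k)\in\mathcal{TK} \text{ with } k\le T-1,\\ &q^{s-1}_{tk}-q^s_{tk}\le V\beta_{tk},\quad q^{s}_{tk}-q^{s-1}_{tk}\le V\beta_{tk}, && \forall s\in[t+1,k]_{\mathbb{Z}},\ (t,k)\in\mathcal{TK},\\ &\alpha,\beta,\gamma\ge 0. \end{align*} (Empty sums are zero.) Then every extreme point of $P$ has all of its $\alpha,\beta,\gamma,\theta$ coordinates in $\{0,1\}$.
   Context: For integers $a\le b$, $[a,b]_{\mathbb{Z}}=\{a,a+1,\dots,b\}$. In the paper's model, $T$ is the number of time periods, $L$ and $\ell$ are the minimum-up and minimum-down time limits of a generator, $\underline{C},\overline{C}$ its generation lower/upper bounds, $\overline{V}$ its start-up/shut-down ramp rate and $V$ its ramp rate. *)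

theory Defs
  imports "HOL-Analysis.Analysis"
begin

datatype var = Alpha int | Beta int int | Gamma int int | Theta int | Q int int int

definition TK :: "int \<Rightarrow> int \<Rightarrow> (int \<times> int) set" where
  "TK T L = {(t,k). 1 \<le> t \<and> t \<le> T \<and> min (t + L - 1) T \<le> k \<and> k \<le> T}"

fun valid_var :: "int \<Rightarrow> int \<Rightarrow> int \<Rightarrow> var \<Rightarrow> bool" where
  "valid_var T L l (Alpha t) = (1 \<le> t \<and> t \<le> T)"
| "valid_var T L l (Beta t k) = ((t,k) \<in> TK T L)"
| "valid_var T L l (Gamma t k) = (L \<le> t \<and> t \<le> T - l - 1 \<and> t + l + 1 \<le> k \<and> k \<le> T)"
| "valid_var T L l (Theta t) = (T - l \<le> t \<and> t \<le> T)"
| "valid_var T L l (Q t k s) = ((t,k) \<in> TK T L \<and> t \<le> s \<and> s \<le> k)"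

definition polyP :: "int \<Rightarrow> int \<Rightarrow> int \<Rightarrow> real \<Rightarrow> real \<Rightarrow> real \<Rightarrow> real \<Rightarrow> (var \<Rightarrow> real) set" where
  "polyP T L l Clo Cup Vbar V = {x.
     (\<forall>v. \<not> valid_var T L l v \<longrightarrow> x v = 0) \<and>
     (\<Sum>t=1..T. x (Alpha t)) \<le> 1 \<and>
     (\<forall>t\<in>{1..T}. - x (Alpha t) + (\<Sum>k=t+L-1..T. x (Beta t k))
                   - (\<Sum>k=L..t-l-1. x (Gamma k t)) = 0) \<and>
     (\<forall>t\<in>{L..T-l-1}. - (\<Sum>k=1..t-L+1. x (Beta k t)) + (\<Sum>k=t+l+1..T. x (Gamma t k)) \<le> 0) \<and>
     (\<forall>t\<in>{T-l..T}. x (Theta t) - (\<Sum>k=1..t-L+1. x (Beta k t)) = 0) \<and>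
     (\<forall>(t,k)\<in>TK T L. \<forall>s\<in>{t..k}.
        Clo * x (Beta t k) \<le> x (Q t k s) \<and> x (Q t k s) \<le> Cup * x (Beta t k)) \<and>
     (\<forall>(t,k)\<in>TK T L. x (Q t k t) \<le> Vbar * x (Beta t k)) \<and>
     (\<forall>(t,k)\<in>TK T L. k \<le> T - 1 \<longrightarrow> x (Q t k k) \<le> Vbar * x (Beta t k)) \<and>
     (\<forall>(t,k)\<in>TK T L. \<forall>s\<in>{t+1..k}.
        x (Q t k (s-1)) - x (Q t k s) \<le> V * x (Beta t k) \<and>
        x (Q t k s) - x (Q t k (s-1)) \<le> V * x (Beta t k)) \<and>
     (\<forall>t. x (Alpha t) \<ge> 0) \<and> (\<forall>t k. x (Beta t k) \<ge> 0) \<and> (\<forall>t k. x (Gamma t k) \<ge> 0)}"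

definition is_extreme_point :: "(var \<Rightarrow> real) \<Rightarrow> (var \<Rightarrow> real) set \<Rightarrow> bool" where
  "is_extreme_point x S \<longleftrightarrow> x \<in> S \<and>
     \<not> (\<exists>a\<in>S. \<exists>b\<in>S. a \<noteq> b \<and> (\<exists>u::real. 0 < u \<and> u < 1 \<and> x = (\<lambda>v. (1 - u) * a v + u * b v)))"

end

theory Submission
  imports Defs
begin



definition Hc :: "int \<Rightarrow> int \<Rightarrow> int \<Rightarrow> real \<Rightarrow> real \<Rightarrow> real \<Rightarrow> real \<Rightarrow> (var \<Rightarrow> real) set" where
  "Hc T L l Clo Cup Vbar V = {x.
     (\<forall>v. \<not> valid_var T L l v \<longrightarrow> x v = 0) \<and>
     (\<forall>t\<in>{1..T}. - x (Alpha t) + (\<Sum>k=t+L-1..T. x (Beta t k))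
                   - (\<Sum>k=L..t-l-1. x (Gamma k t)) = 0) \<and>
     (\<forall>t\<in>{L..T-l-1}. - (\<Sum>k=1..t-L+1. x (Beta k t)) + (\<Sum>k=t+l+1..T. x (Gamma t k)) \<le> 0) \<and>
     (\<forall>t\<in>{T-l..T}. x (Theta t) - (\<Sum>k=1..t-L+1. x (Beta k t)) = 0) \<and>
     (\<forall>(t,k)\<in>TK T L. \<forall>s\<in>{t..k}.
        Clo * x (Beta t k) \<le> x (Q t k s) \<and> x (Q t k s) \<le> Cup * x (Beta t k)) \<and>
     (\<forall>(t,k)\<in>TK T L. x (Q t k t) \<le> Vbar * x (Beta t k)) \<and>
     (\<forall>(t,k)\<in>TK T L. k \<le> T - 1 \<longrightarrow> x (Q t k k) \<le> Vbar * x (Beta t k)) \<and>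
     (\<forall>(t,k)\<in>TK T L. \<forall>s\<in>{t+1..k}.
        x (Q t k (s-1)) - x (Q t k s) \<le> V * x (Beta t k) \<and>
        x (Q t k s) - x (Q t k (s-1)) \<le> V * x (Beta t k)) \<and>
     (\<forall>t. x (Alpha t) \<ge> 0) \<and> (\<forall>t k. x (Beta t k) \<ge> 0) \<and> (\<forall>t k. x (Gamma t k) \<ge> 0)}"

lemma polyP_Hc: "polyP T L l Clo Cup Vbar V = {x \<in> Hc T L l Clo Cup Vbar V. (\<Sum>t=1..T. x (Alpha t)) \<le> 1}"
  unfolding polyP_def Hc_def by blast

lemma comb_le: "(u1::real) \<le> v1 \<Longrightarrow> u2 \<le> v2 \<Longrightarrow> a \<ge> 0 \<Longrightarrow> b \<ge> 0 \<Longrightarrow> a * u1 + b * u2 \<le> a * v1 + b * v2"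
  by (simp add: add_mono mult_left_mono)

context fixes T L l :: int and Clo Cup Vbar V :: real and x :: "var \<Rightarrow> real"
  assumes xH: "x \<in> Hc T L l Clo Cup Vbar V"
begin
lemma Hc_valid: "\<not> valid_var T L l v \<Longrightarrow> x v = 0" using xH by (simp add: Hc_def)
lemma Hc_S: "t \<in> {1..T} \<Longrightarrow> - x (Alpha t) + (\<Sum>k=t+L-1..T. x (Beta t k)) - (\<Sum>k=L..t-l-1. x (Gamma k t)) = 0"
  using xH by (simp add: Hc_def)
lemma Hc_E: "t\<in>{L..T-l-1} \<Longrightarrow> - (\<Sum>k=1..t-L+1. x (Beta k t)) + (\<Sum>k=t+l+1..T. x (Gamma t k)) \<le> 0"
  using xH by (simp add: Hc_def)
lemma Hc_Th: "t\<in>{T-l..T} \<Longrightarrow> x (Theta t) - (\<Sum>k=1..t-L+1. x (Beta k t)) = 0"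
  using xH by (simp add: Hc_def)
lemma Hc_Q1: "(t,k)\<in>TK T L \<Longrightarrow> s\<in>{t..k} \<Longrightarrow> Clo * x (Beta t k) \<le> x (Q t k s) \<and> x (Q t k s) \<le> Cup * x (Beta t k)"
  using xH unfolding Hc_def mem_Collect_eq by blast
lemma Hc_Q2: "(t,k)\<in>TK T L \<Longrightarrow> x (Q t k t) \<le> Vbar * x (Beta t k)"
  using xH unfolding Hc_def mem_Collect_eq by blast
lemma Hc_Q3: "(t,k)\<in>TK T L \<Longrightarrow> k \<le> T - 1 \<Longrightarrow> x (Q t k k) \<le> Vbar * x (Beta t k)"
  using xH unfolding Hc_def mem_Collect_eq by blast
lemma Hc_Q4: "(t,k)\<in>TK T L \<Longrightarrow> s\<in>{t+1..k} \<Longrightarrow> x (Q t k (s-1)) - x (Q t k s) \<le> V * x (Beta t k) \<and>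
        x (Q t k s) - x (Q t k (s-1)) \<le> V * x (Beta t k)"
  using xH unfolding Hc_def mem_Collect_eq by blast
lemma Hc_nn: "x (Alpha t) \<ge> 0" "x (Beta t k) \<ge> 0" "x (Gamma t k) \<ge> 0"
  using xH by (simp_all add: Hc_def)
end

lemma HcI:
  assumes "\<And>v. \<not> valid_var T L l v \<Longrightarrow> x v = 0"
   "\<And>t. t \<in> {1..T} \<Longrightarrow> - x (Alpha t) + (\<Sum>k=t+L-1..T. x (Beta t k)) - (\<Sum>k=L..t-l-1. x (Gamma k t)) = 0"
   "\<And>t. t\<in>{L..T-l-1} \<Longrightarrow> - (\<Sum>k=1..t-L+1. x (Beta k t)) + (\<Sum>k=t+l+1..T. x (Gamma t k)) \<le> 0"
   "\<And>t. t\<in>{T-l..T} \<Longrightarrow> x (Theta t) - (\<Sum>k=1..t-L+1. x (Beta k t)) = 0"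
   "\<And>t k s. (t,k)\<in>TK T L \<Longrightarrow> s\<in>{t..k} \<Longrightarrow> Clo * x (Beta t k) \<le> x (Q t k s) \<and> x (Q t k s) \<le> Cup * x (Beta t k)"
   "\<And>t k. (t,k)\<in>TK T L \<Longrightarrow> x (Q t k t) \<le> Vbar * x (Beta t k)"
   "\<And>t k. (t,k)\<in>TK T L \<Longrightarrow> k \<le> T - 1 \<Longrightarrow> x (Q t k k) \<le> Vbar * x (Beta t k)"
   "\<And>t k s. (t,k)\<in>TK T L \<Longrightarrow> s\<in>{t+1..k} \<Longrightarrow> x (Q t k (s-1)) - x (Q t k s) \<le> V * x (Beta t k) \<and>
        x (Q t k s) - x (Q t k (s-1)) \<le> V * x (Beta t k)"
   "\<And>t. x (Alpha t) \<ge> 0" "\<And>t k. x (Beta t k) \<ge> 0" "\<And>t k. x (Gamma t k) \<ge> 0"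
 shows "x \<in> Hc T L l Clo Cup Vbar V"
  unfolding Hc_def mem_Collect_eq using assms by blast

lemma Hc_comb:
  assumes y: "y \<in> Hc T L l Clo Cup Vbar V" and z: "z \<in> Hc T L l Clo Cup Vbar V"
    and a: "a \<ge> 0" and b: "b \<ge> 0"
  shows "(\<lambda>v. a * y v + b * z v) \<in> Hc T L l Clo Cup Vbar V"
proof (rule HcI)
  fix v assume "\<not> valid_var T L l v" then show "a * y v + b * z v = 0" using Hc_valid[OF y] Hc_valid[OF z] by simp
next
  fix t assume t: "t \<in> {1..T}"
  have e1: "a * (- y (Alpha t) + (\<Sum>k = t + L - 1..T. y (Beta t k)) - (\<Sum>k = L..t - l - 1. y (Gamma k t))) = 0"
    using Hc_S[OF y t] by simp
  have e2: "b * (- z (Alpha t) + (\<Sum>k = t + L - 1..T. z (Beta t k)) - (\<Sum>k = L..t - l - 1. z (Gamma k t))) = 0"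
    using Hc_S[OF z t] by simp
  show "- (a * y (Alpha t) + b * z (Alpha t)) + (\<Sum>k = t + L - 1..T. a * y (Beta t k) + b * z (Beta t k)) -
        (\<Sum>k = L..t - l - 1. a * y (Gamma k t) + b * z (Gamma k t)) = 0"
    using e1 e2 unfolding sum.distrib sum_distrib_left[symmetric] by (simp add: algebra_simps)
next
  fix t assume t: "t \<in> {L..T-l-1}"
  have "(\<Sum>k = t + l + 1..T. y (Gamma t k)) \<le> (\<Sum>k = 1..t - L + 1. y (Beta k t))"
       "(\<Sum>k = t + l + 1..T. z (Gamma t k)) \<le> (\<Sum>k = 1..t - L + 1. z (Beta k t))"
    using Hc_E[OF y t] Hc_E[OF z t] by auto
  from comb_le[OF this a b] show "- (\<Sum>k=1..t-L+1. a * y (Beta k t) + b * z (Beta k t)) + (\<Sum>k=t+l+1..T. a * y (Gamma t k) + b * z (Gamma t k)) \<le> 0"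
    by (simp add: sum.distrib sum_distrib_left[symmetric])
next
  fix t assume t: "t \<in> {T-l..T}"
  have "y (Theta t) = (\<Sum>k=1..t-L+1. y (Beta k t))" "z (Theta t) = (\<Sum>k=1..t-L+1. z (Beta k t))"
    using Hc_Th[OF y t] Hc_Th[OF z t] by auto
  then show "a * y (Theta t) + b * z (Theta t) - (\<Sum>k=1..t-L+1. a * y (Beta k t) + b * z (Beta k t)) = 0"
    by (simp add: sum.distrib sum_distrib_left[symmetric])
next
  fix t k s assume tk: "(t,k) \<in> TK T L" and s: "s \<in> {t..k}"
  note h = Hc_Q1[OF y tk s] Hc_Q1[OF z tk s]
  show "Clo * (a * y (Beta t k) + b * z (Beta t k)) \<le> a * y (Q t k s) + b * z (Q t k s) \<and>
    a * y (Q t k s) + b * z (Q t k s) \<le> Cup * (a * y (Beta t k) + b * z (Beta t k))"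
    using comb_le[OF conjunct1[OF h(1)] conjunct1[OF h(2)] a b] comb_le[OF conjunct2[OF h(1)] conjunct2[OF h(2)] a b]
    by (simp add: algebra_simps)
next
  fix t k assume tk: "(t,k) \<in> TK T L"
  show "a * y (Q t k t) + b * z (Q t k t) \<le> Vbar * (a * y (Beta t k) + b * z (Beta t k))"
    using comb_le[OF Hc_Q2[OF y tk] Hc_Q2[OF z tk] a b] by (simp add: algebra_simps)
next
  fix t k assume tk: "(t,k) \<in> TK T L" and kT: "k \<le> T - 1"
  show "a * y (Q t k k) + b * z (Q t k k) \<le> Vbar * (a * y (Beta t k) + b * z (Beta t k))"
    using comb_le[OF Hc_Q3[OF y tk kT] Hc_Q3[OF z tk kT] a b] by (simp add: algebra_simps)
next
  fix t k s assume tk: "(t,k) \<in> TK T L" and s: "s \<in> {t+1..k}"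
  note h = Hc_Q4[OF y tk s] Hc_Q4[OF z tk s]
  show "a * y (Q t k (s-1)) + b * z (Q t k (s-1)) - (a * y (Q t k s) + b * z (Q t k s)) \<le> V * (a * y (Beta t k) + b * z (Beta t k)) \<and>
    a * y (Q t k s) + b * z (Q t k s) - (a * y (Q t k (s-1)) + b * z (Q t k (s-1))) \<le> V * (a * y (Beta t k) + b * z (Beta t k))"
    using comb_le[OF conjunct1[OF h(1)] conjunct1[OF h(2)] a b] comb_le[OF conjunct2[OF h(1)] conjunct2[OF h(2)] a b]
    by (simp add: algebra_simps)
qed (use Hc_nn[OF y] Hc_nn[OF z] a b in auto)




definition SA :: "int \<Rightarrow> (var \<Rightarrow> real) \<Rightarrow> real" where
  "SA T y = (\<Sum>t=1..T. y (Alpha t))"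

lemma SA_comb: "SA T (\<lambda>v. a * y v + b * z v) = a * SA T y + b * SA T z"
  by (simp add: SA_def sum.distrib sum_distrib_left)

lemma SA_nn: "y \<in> Hc T L l Clo Cup Vbar V \<Longrightarrow> SA T y \<ge> 0"
  unfolding SA_def by (rule sum_nonneg) (simp add: Hc_nn)

lemma polyP_iff: "x \<in> polyP T L l Clo Cup Vbar V \<longleftrightarrow> x \<in> Hc T L l Clo Cup Vbar V \<and> SA T x \<le> 1"
  by (simp add: polyP_Hc SA_def)

lemma extreme_half:
  assumes ex: "is_extreme_point x (polyP T L l Clo Cup Vbar V)"
    and p1: "p1 \<in> polyP T L l Clo Cup Vbar V" and p2: "p2 \<in> polyP T L l Clo Cup Vbar V"
    and eq: "\<And>v. x v = (1/2) * p1 v + (1/2) * p2 v"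
  shows "p1 = p2"
proof (rule ccontr)
  assume ne: "p1 \<noteq> p2"
  have "x = (\<lambda>v. (1 - 1/2) * p1 v + (1/2) * p2 v)" using eq by (auto simp: fun_eq_iff)
  moreover have "(0::real) < 1/2 \<and> (1/2::real) < 1" by simp
  ultimately show False using ex p1 p2 ne unfolding is_extreme_point_def by blast
qed

lemma extreme_decomp:
  assumes ex: "is_extreme_point x (polyP T L l Clo Cup Vbar V)"
    and y: "y \<in> Hc T L l Clo Cup Vbar V" and z: "z \<in> Hc T L l Clo Cup Vbar V"
    and xyz: "\<And>v. x v = y v + z v"
  shows "\<exists>\<mu>. \<forall>v. y v = \<mu> * x v"
proof -
  have xP: "x \<in> polyP T L l Clo Cup Vbar V" using ex by (simp add: is_extreme_point_def)
  define a where "a = SA T y"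
  define b where "b = SA T z"
  have a0: "a \<ge> 0" "b \<ge> 0" using SA_nn[OF y] SA_nn[OF z] by (simp_all add: a_def b_def)
  have "SA T x = a + b" unfolding a_def b_def SA_def xyz by (simp add: sum.distrib)
  with xP have ab1: "a + b \<le> 1" by (simp add: polyP_iff)
  show ?thesis
  proof (cases "b = 0")
    case True
    let ?p1 = "\<lambda>v. 1 * y v + 2 * z v" and ?p2 = "\<lambda>v. 1 * y v + 0 * z v"
    have P1: "?p1 \<in> polyP T L l Clo Cup Vbar V" unfolding polyP_iff SA_comb
      using Hc_comb[OF y z, of 1 2] True ab1 a0 by (simp add: a_def[symmetric] b_def[symmetric])
    have P2: "?p2 \<in> polyP T L l Clo Cup Vbar V" unfolding polyP_iff SA_comb
      using y True ab1 a0 by (simp add: a_def[symmetric] b_def[symmetric])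
    have "?p1 = ?p2" by (rule extreme_half[OF ex P1 P2]) (simp add: xyz field_simps)
    then have "\<And>v. z v = 0" by (simp add: fun_eq_iff)
    then show ?thesis using xyz by (intro exI[of _ 1]) simp
  next
    case False
    with a0 have bp: "b > 0" by simp
    define d where "d = b / (a + b)"
    define e where "e = a / (a + b)"
    have abp: "a + b > 0" using bp a0 by simp
    have de: "d + e = 1" "d \<ge> 0" "e \<ge> 0" using abp a0 by (simp_all add: d_def e_def add_divide_distrib[symmetric])
    have dew: "\<And>w. d * w + e * w = w" using de(1) by (metis distrib_right mult_1)
    let ?p1 = "\<lambda>v. (1 + d) * y v + d * z v" and ?p2 = "\<lambda>v. (1 - d) * y v + (1 + e) * z v"
    have dd: "d * (a + b) = b" using abp by (simp add: d_def)
    have ee: "d * a = e * b" using abp by (simp add: d_def e_def)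
    have "(1 + d) * a + d * b = a + d * (a + b)" by (simp add: algebra_simps)
    then have s1: "(1 + d) * a + d * b = a + b" using dd by simp
    have "(1 - d) * a + (1 + e) * b = a + b - d * a + e * b" by (simp add: algebra_simps)
    then have s2: "(1 - d) * a + (1 + e) * b = a + b" using ee by simp
    have P1: "?p1 \<in> polyP T L l Clo Cup Vbar V" unfolding polyP_iff SA_comb
      using Hc_comb[OF y z, of "1+d" d] de ab1 s1 by (simp add: a_def[symmetric] b_def[symmetric])
    have P2: "?p2 \<in> polyP T L l Clo Cup Vbar V" unfolding polyP_iff SA_comb
      using Hc_comb[OF y z, of "1-d" "1+e"] de ab1 s2 by (simp add: a_def[symmetric] b_def[symmetric])
    have "?p1 = ?p2" by (rule extreme_half[OF ex P1 P2]) (use de dew in \<open>simp add: xyz field_simps; simp add: dew\<close>)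
    then have pv: "\<And>v. (1 + d) * y v + d * z v = (1 - d) * y v + (1 + e) * z v" by metis
    show ?thesis
    proof (intro exI[of _ e] allI)
      fix v
      have e1: "e = 1 - d" using de by simp
      have "2 * d * y v = 2 * e * z v" using pv[of v] by (simp add: e1 algebra_simps; linarith)
      then have "b * y v = a * z v" using abp by (simp add: d_def e_def field_simps)
      then have "(a + b) * y v = a * x v" by (simp add: xyz algebra_simps)
      then show "y v = e * x v" using abp by (simp add: e_def field_simps)
    qed
  qed
qed

lemma extreme_scale:
  assumes ex: "is_extreme_point x (polyP T L l Clo Cup Vbar V)"
  shows "(\<forall>v. x v = 0) \<or> SA T x = 1"
proof (rule ccontr)
  assume H: "\<not> ((\<forall>v. x v = 0) \<or> SA T x = 1)"
  have xP: "x \<in> polyP T L l Clo Cup Vbar V" using ex by (simp add: is_extreme_point_def)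
  then have xH: "x \<in> Hc T L l Clo Cup Vbar V" and s1: "SA T x \<le> 1" by (simp_all add: polyP_iff)
  define s where "s = SA T x"
  have s0: "s \<ge> 0" using SA_nn[OF xH] by (simp add: s_def)
  have sl: "s < 1" using s1 H by (simp add: s_def)
  define d where "d = (1 - s) / 2"
  have d0: "d > 0" using sl by (simp add: d_def)
  have d1: "d \<le> 1" using sl s0 by (simp add: d_def)
  have "d * s \<le> d * 1" using d0 sl by (intro mult_left_mono) auto
  then have "d * s \<le> d" by simp
  moreover have "s + d \<le> 1" using sl by (simp add: d_def field_simps)
  ultimately have "s + d * s \<le> 1" by linarith
  then have q1: "(1 + d) * s + 0 * s \<le> 1" by (simp add: algebra_simps)
  have "d * s \<ge> 0" using d0 s0 by simp
  moreover have "(1 - d) * s + 0 * s = s - d * s" by (simp add: algebra_simps)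
  ultimately have q2: "(1 - d) * s + 0 * s \<le> 1" using sl by linarith
  let ?p1 = "\<lambda>v. (1 + d) * x v + 0 * x v" and ?p2 = "\<lambda>v. (1 - d) * x v + 0 * x v"
  have P1: "?p1 \<in> polyP T L l Clo Cup Vbar V" unfolding polyP_iff SA_comb
    using Hc_comb[OF xH xH, of "1+d" 0] d0 q1 by (simp add: s_def)
  have P2: "?p2 \<in> polyP T L l Clo Cup Vbar V" unfolding polyP_iff SA_comb
    using Hc_comb[OF xH xH, of "1-d" 0] d1 q2 by (simp add: s_def)
  have "?p1 = ?p2" by (rule extreme_half[OF ex P1 P2]) (simp add: algebra_simps)
  then have eqv: "?p1 v = ?p2 v" for v by (rule fun_cong)
  have "\<And>v. x v = 0"
  proof -
    fix v have "(1 + d) * x v = (1 - d) * x v" using eqv[of v] by simp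
    then show "x v = 0" using d0 by (simp add: algebra_simps)
  qed
  then show False using H by simp
qed




fun vtl :: "var \<Rightarrow> int" where
  "vtl (Alpha t) = 0" | "vtl (Beta t k) = 2*t" | "vtl (Gamma t k) = 2*t+1" | "vtl (Theta t) = 0" | "vtl (Q t k s) = 0"
fun vhd :: "var \<Rightarrow> int" where
  "vhd (Alpha t) = 2*t" | "vhd (Beta t k) = 2*k+1" | "vhd (Gamma t k) = 2*k" | "vhd (Theta t) = 0" | "vhd (Q t k s) = 0"
fun isarc :: "int \<Rightarrow> int \<Rightarrow> int \<Rightarrow> var \<Rightarrow> bool" where
  "isarc T L l (Alpha t) = (1 \<le> t \<and> t \<le> T)"
| "isarc T L l (Beta t k) = (1 \<le> t \<and> t + L - 1 \<le> k \<and> k \<le> T)"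
| "isarc T L l (Gamma t k) = (L \<le> t \<and> t \<le> T - l - 1 \<and> t + l + 1 \<le> k \<and> k \<le> T)"
| "isarc T L l (Theta t) = False"
| "isarc T L l (Q t k s) = False"

definition Arcs :: "int \<Rightarrow> int \<Rightarrow> int \<Rightarrow> var set" where "Arcs T L l = {a. isarc T L l a}"

definition inS :: "var set \<Rightarrow> (var \<Rightarrow> real) \<Rightarrow> int \<Rightarrow> real" where
  "inS A h r = (\<Sum>a\<in>{a\<in>A. vhd a = r}. h a)"
definition outS :: "var set \<Rightarrow> (var \<Rightarrow> real) \<Rightarrow> int \<Rightarrow> real" where
  "outS A h r = (\<Sum>a\<in>{a\<in>A. vtl a = r}. h a)"

lemma par1: "(2*(a::int)+1 = 2*b) = False" by presburger
lemma par2: "(2*(a::int) = 2*b+1) = False" by presburger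
lemma par3: "(2*(a::int)+1 = 0) = False" by presburger
lemma par4: "(0 = 2*(a::int)+1) = False" by presburger

context fixes T L l :: int assumes L1: "L \<ge> 1" and l1: "l \<ge> 1"
begin

lemma finite_Arcs: "finite (Arcs T L l)"
proof -
  have "Arcs T L l \<subseteq> Alpha ` {1..T} \<union> (\<lambda>(t,k). Beta t k) ` ({1..T} \<times> {1..T}) \<union> (\<lambda>(t,k). Gamma t k) ` ({1..T} \<times> {1..T})"
  proof
    fix a assume "a \<in> Arcs T L l"
    then show "a \<in> Alpha ` {1..T} \<union> (\<lambda>(t,k). Beta t k) ` ({1..T} \<times> {1..T}) \<union> (\<lambda>(t,k). Gamma t k) ` ({1..T} \<times> {1..T})"
      using L1 l1 by (cases a) (auto simp: Arcs_def image_iff)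
  qed
  then show ?thesis by (rule finite_subset) auto
qed

lemma Arcs_prop: "a \<in> Arcs T L l \<Longrightarrow> vtl a < vhd a \<and> 0 \<le> vtl a"
  using L1 l1 by (cases a) (auto simp: Arcs_def)

lemma set_out_S: "1 \<le> t \<Longrightarrow> t \<le> T \<Longrightarrow> {a \<in> Arcs T L l. vtl a = 2*t} = Beta t ` {t+L-1..T}"
  apply (rule set_eqI) apply (insert L1 l1) apply (case_tac x) apply (auto simp: Arcs_def image_iff par1 par2 par3 par4) done
lemma set_in_S: "1 \<le> t \<Longrightarrow> t \<le> T \<Longrightarrow> {a \<in> Arcs T L l. vhd a = 2*t} = insert (Alpha t) ((\<lambda>k. Gamma k t) ` {L..t-l-1})"
  apply (rule set_eqI) apply (insert L1 l1) apply (case_tac x) apply (auto simp: Arcs_def image_iff par1 par2 par3 par4) done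
lemma set_out_E: "L \<le> t \<Longrightarrow> t \<le> T-l-1 \<Longrightarrow> {a \<in> Arcs T L l. vtl a = 2*t+1} = Gamma t ` {t+l+1..T}"
  apply (rule set_eqI) apply (insert L1 l1) apply (case_tac x) apply (auto simp: Arcs_def image_iff par1 par2 par3 par4) done
lemma set_in_E: "t \<le> T \<Longrightarrow> {a \<in> Arcs T L l. vhd a = 2*t+1} = (\<lambda>k. Beta k t) ` {1..t-L+1}"
  apply (rule set_eqI) apply (insert L1 l1) apply (case_tac x) apply (auto simp: Arcs_def image_iff par1 par2 par3 par4) done
lemma set_out_0: "{a \<in> Arcs T L l. vtl a = 0} = Alpha ` {1..T}"
  apply (rule set_eqI) apply (insert L1 l1) apply (case_tac x) apply (auto simp: Arcs_def image_iff par1 par2 par3 par4) done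
lemma set_in_0: "{a \<in> Arcs T L l. vhd a = 0} = {}"
  apply (rule set_eqI) apply (insert L1 l1) apply (case_tac x) apply (auto simp: Arcs_def image_iff par1 par2 par3 par4) done
lemma set_out_S_else: "t \<noteq> 0 \<Longrightarrow> \<not> (1 \<le> t \<and> t \<le> T) \<Longrightarrow> {a \<in> Arcs T L l. vtl a = 2*t} = {}"
  apply (rule set_eqI) apply (insert L1 l1) apply (case_tac x) apply (auto simp: Arcs_def image_iff par1 par2 par3 par4) done
lemma set_in_S_else: "\<not> (1 \<le> t \<and> t \<le> T) \<Longrightarrow> {a \<in> Arcs T L l. vhd a = 2*t} = {}"
  apply (rule set_eqI) apply (insert L1 l1) apply (case_tac x) apply (auto simp: Arcs_def image_iff par1 par2 par3 par4) done
lemma set_out_E_else: "\<not> (L \<le> t \<and> t \<le> T-l-1) \<Longrightarrow> {a \<in> Arcs T L l. vtl a = 2*t+1} = {}"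
  apply (rule set_eqI) apply (insert L1 l1) apply (case_tac x) apply (auto simp: Arcs_def image_iff par1 par2 par3 par4) done

lemma out_S: "1 \<le> t \<Longrightarrow> t \<le> T \<Longrightarrow> outS (Arcs T L l) h (2*t) = (\<Sum>k=t+L-1..T. h (Beta t k))"
  unfolding outS_def by (simp add: set_out_S sum.reindex inj_on_def)
lemma in_S: "1 \<le> t \<Longrightarrow> t \<le> T \<Longrightarrow> inS (Arcs T L l) h (2*t) = h (Alpha t) + (\<Sum>k=L..t-l-1. h (Gamma k t))"
  unfolding inS_def by (simp add: set_in_S sum.reindex inj_on_def image_iff)
lemma out_E: "L \<le> t \<Longrightarrow> t \<le> T-l-1 \<Longrightarrow> outS (Arcs T L l) h (2*t+1) = (\<Sum>k=t+l+1..T. h (Gamma t k))"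
  unfolding outS_def by (simp add: set_out_E sum.reindex inj_on_def)
lemma in_E: "t \<le> T \<Longrightarrow> inS (Arcs T L l) h (2*t+1) = (\<Sum>k=1..t-L+1. h (Beta k t))"
  unfolding inS_def by (simp add: set_in_E sum.reindex inj_on_def)
lemma out_0: "outS (Arcs T L l) h 0 = (\<Sum>t=1..T. h (Alpha t))"
  unfolding outS_def by (simp add: set_out_0 sum.reindex inj_on_def)
lemma in_0: "inS (Arcs T L l) h 0 = 0"
  unfolding inS_def by (simp add: set_in_0)
lemma out_S_else: "t \<noteq> 0 \<Longrightarrow> \<not> (1 \<le> t \<and> t \<le> T) \<Longrightarrow> outS (Arcs T L l) h (2*t) = 0"
  unfolding outS_def by (simp add: set_out_S_else)
lemma in_S_else: "\<not> (1 \<le> t \<and> t \<le> T) \<Longrightarrow> inS (Arcs T L l) h (2*t) = 0"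
  unfolding inS_def by (simp add: set_in_S_else)
lemma out_E_else: "\<not> (L \<le> t \<and> t \<le> T-l-1) \<Longrightarrow> outS (Arcs T L l) h (2*t+1) = 0"
  unfolding outS_def by (simp add: set_out_E_else)

end

definition wt :: "int \<Rightarrow> int \<Rightarrow> int \<Rightarrow> (var \<Rightarrow> real) \<Rightarrow> (var \<Rightarrow> real) \<Rightarrow> var \<Rightarrow> real" where
  "wt T L l w x v = (case v of Alpha t \<Rightarrow> w v * x v | Beta t k \<Rightarrow> w v * x v | Gamma t k \<Rightarrow> w v * x v
     | Q t k s \<Rightarrow> w (Beta t k) * x v
     | Theta t \<Rightarrow> if T - l \<le> t \<and> t \<le> T then (\<Sum>k=1..t-L+1. w (Beta k t) * x (Beta k t)) else 0)"

lemma wt_Hc: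
  assumes xH: "x \<in> Hc T L l Clo Cup Vbar V" and w0: "\<And>v. 0 \<le> w v"
    and S: "\<And>t. t\<in>{1..T} \<Longrightarrow> - (w (Alpha t) * x (Alpha t)) + (\<Sum>k=t+L-1..T. w (Beta t k) * x (Beta t k))
              - (\<Sum>k=L..t-l-1. w (Gamma k t) * x (Gamma k t)) = 0"
    and E: "\<And>t. t\<in>{L..T-l-1} \<Longrightarrow> - (\<Sum>k=1..t-L+1. w (Beta k t) * x (Beta k t)) + (\<Sum>k=t+l+1..T. w (Gamma t k) * x (Gamma t k)) \<le> 0"
  shows "wt T L l w x \<in> Hc T L l Clo Cup Vbar V"
proof (rule HcI)
  fix v assume "\<not> valid_var T L l v"
  then show "wt T L l w x v = 0" using Hc_valid[OF xH, of v]
    by (cases v) (auto simp: wt_def)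
next
  fix t k s assume tk: "(t,k) \<in> TK T L" and s: "s \<in> {t..k}"
  note h = Hc_Q1[OF xH tk s]
  have "w (Beta t k) * (Clo * x (Beta t k)) \<le> w (Beta t k) * x (Q t k s)"
       "w (Beta t k) * x (Q t k s) \<le> w (Beta t k) * (Cup * x (Beta t k))"
    using h w0 by (auto intro: mult_left_mono)
  then show "Clo * wt T L l w x (Beta t k) \<le> wt T L l w x (Q t k s) \<and> wt T L l w x (Q t k s) \<le> Cup * wt T L l w x (Beta t k)"
    by (simp add: wt_def algebra_simps)
next
  fix t k assume tk: "(t,k) \<in> TK T L"
  have "w (Beta t k) * x (Q t k t) \<le> w (Beta t k) * (Vbar * x (Beta t k))"
    using Hc_Q2[OF xH tk] w0 by (auto intro: mult_left_mono)
  then show "wt T L l w x (Q t k t) \<le> Vbar * wt T L l w x (Beta t k)"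
    by (simp add: wt_def algebra_simps)
next
  fix t k assume tk: "(t,k) \<in> TK T L" and kT: "k \<le> T - 1"
  have "w (Beta t k) * x (Q t k k) \<le> w (Beta t k) * (Vbar * x (Beta t k))"
    using Hc_Q3[OF xH tk kT] w0 by (auto intro: mult_left_mono)
  then show "wt T L l w x (Q t k k) \<le> Vbar * wt T L l w x (Beta t k)"
    by (simp add: wt_def algebra_simps)
next
  fix t k s assume tk: "(t,k) \<in> TK T L" and s: "s \<in> {t+1..k}"
  note h = Hc_Q4[OF xH tk s]
  have "w (Beta t k) * (x (Q t k (s-1)) - x (Q t k s)) \<le> w (Beta t k) * (V * x (Beta t k))"
       "w (Beta t k) * (x (Q t k s) - x (Q t k (s-1))) \<le> w (Beta t k) * (V * x (Beta t k))"
    using h w0 by (auto intro: mult_left_mono)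
  then show "wt T L l w x (Q t k (s - 1)) - wt T L l w x (Q t k s) \<le> V * wt T L l w x (Beta t k) \<and>
           wt T L l w x (Q t k s) - wt T L l w x (Q t k (s - 1)) \<le> V * wt T L l w x (Beta t k)"
    by (simp add: wt_def algebra_simps)
qed (use S E w0 Hc_nn[OF xH] in \<open>auto simp: wt_def\<close>)

lemma wt_compl:
  assumes xH: "x \<in> Hc T L l Clo Cup Vbar V"
  shows "x v - wt T L l w x v = wt T L l (\<lambda>v. 1 - w v) x v"
proof (cases v)
  case (Theta t)
  show ?thesis
  proof (cases "T - l \<le> t \<and> t \<le> T")
    case True
    then have "x (Theta t) = (\<Sum>k=1..t-L+1. x (Beta k t))" using Hc_Th[OF xH, of t] by simp
    then show ?thesis using True Theta by (simp add: wt_def sum_subtractf[symmetric] algebra_simps)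
  next
    case False
    then show ?thesis using Theta Hc_valid[OF xH, of v] by (auto simp: wt_def)
  qed
qed (auto simp: wt_def algebra_simps)

lemma wt_Hc_abs:
  assumes L1: "L \<ge> 1" and l1: "l \<ge> 1" and xH: "x \<in> Hc T L l Clo Cup Vbar V" and w0: "\<And>v. 0 \<le> w v"
    and S: "\<And>t. 1 \<le> t \<Longrightarrow> t \<le> T \<Longrightarrow> outS (Arcs T L l) (\<lambda>a. w a * x a) (2*t) = inS (Arcs T L l) (\<lambda>a. w a * x a) (2*t)"
    and E: "\<And>t. L \<le> t \<Longrightarrow> t \<le> T-l-1 \<Longrightarrow> outS (Arcs T L l) (\<lambda>a. w a * x a) (2*t+1) \<le> inS (Arcs T L l) (\<lambda>a. w a * x a) (2*t+1)"
  shows "wt T L l w x \<in> Hc T L l Clo Cup Vbar V"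
proof (rule wt_Hc[OF xH w0])
  fix t assume t: "t \<in> {1..T}"
  then show "- (w (Alpha t) * x (Alpha t)) + (\<Sum>k=t+L-1..T. w (Beta t k) * x (Beta t k))
              - (\<Sum>k=L..t-l-1. w (Gamma k t) * x (Gamma k t)) = 0"
    using S[of t] out_S[OF L1 l1, of t T] in_S[OF L1 l1, of t T] by simp
next
  fix t assume t: "t \<in> {L..T-l-1}"
  then show "- (\<Sum>k=1..t-L+1. w (Beta k t) * x (Beta k t)) + (\<Sum>k=t+l+1..T. w (Gamma t k) * x (Gamma t k)) \<le> 0"
    using E[of t] out_E[OF L1 l1, of t T] in_E[OF L1 l1, of t T] l1 by simp
qed




lemma inS_filter: "finite A \<Longrightarrow> inS A h r = (\<Sum>a\<in>A. if vhd a = r then h a else 0)"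
  unfolding inS_def by (simp add: sum.inter_filter)
lemma outS_filter: "finite A \<Longrightarrow> outS A h r = (\<Sum>a\<in>A. if vtl a = r then h a else 0)"
  unfolding outS_def by (simp add: sum.inter_filter)

lemma cut_bound:
  assumes fin: "finite A" and arcs: "\<And>a. a \<in> A \<Longrightarrow> vtl a < vhd a \<and> 0 \<le> vtl a"
    and nn: "\<And>a. a \<in> A \<Longrightarrow> 0 \<le> x a"
    and flow: "\<And>r. outS A x r \<le> inS A x r + (if r = 0 then 1 else 0)"
  shows "inS A x r \<le> 1"
proof -
  define C where "C r = (\<Sum>a\<in>A. if vtl a \<le> r \<and> r < vhd a then x a else 0)" for r
  have step: "C (r+1) + inS A x (r+1) = C r + outS A x (r+1)" for r
  proof -
    have "C (r+1) + inS A x (r+1) = (\<Sum>a\<in>A. (if vtl a \<le> r+1 \<and> r+1 < vhd a then x a else 0) + (if vhd a = r+1 then x a else 0))"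
      unfolding C_def inS_filter[OF fin] by (simp add: sum.distrib)
    also have "\<dots> = (\<Sum>a\<in>A. (if vtl a \<le> r \<and> r < vhd a then x a else 0) + (if vtl a = r+1 then x a else 0))"
    proof (rule sum.cong)
      fix a assume "a \<in> A"
      then have "vtl a < vhd a" using arcs by blast
      then show "(if vtl a \<le> r+1 \<and> r+1 < vhd a then x a else 0) + (if vhd a = r+1 then x a else 0) =
          (if vtl a \<le> r \<and> r < vhd a then x a else 0) + (if vtl a = r+1 then x a else 0)"
        by auto
    qed simp
    also have "\<dots> = C r + outS A x (r+1)"
      unfolding C_def outS_filter[OF fin] by (simp add: sum.distrib)
    finally show ?thesis .
  qed
  have C0: "C (-1) = 0" unfolding C_def
    by (rule sum.neutral) (use arcs in force)
  have Cn: "C (int n - 1) \<le> (if n = 0 then 0 else 1)" for n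
  proof (induction n)
    case 0 then show ?case using C0 by simp
  next
    case (Suc n)
    have "C (int (Suc n) - 1) + inS A x (int n) = C (int n - 1) + outS A x (int n)"
      using step[of "int n - 1"] by simp
    moreover have "outS A x (int n) \<le> inS A x (int n) + (if n = 0 then 1 else 0)"
      using flow[of "int n"] by simp
    ultimately show ?case using Suc.IH by (auto split: if_splits)
  qed
  show ?thesis
  proof (cases "r \<le> 0")
    case True
    have "inS A x r = 0" unfolding inS_def
      by (rule sum.neutral) (use arcs True in force)
    then show ?thesis by simp
  next
    case False
    have "inS A x r \<le> C (r - 1)"
      unfolding inS_filter[OF fin] C_def
    proof (rule sum_mono)
      fix a assume "a \<in> A"
      then show "(if vhd a = r then x a else 0) \<le> (if vtl a \<le> r - 1 \<and> r - 1 < vhd a then x a else 0)"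
        using arcs[of a] nn[of a] by auto
    qed
    also have "C (r - 1) \<le> 1" using Cn[of "nat r"] False by (simp split: if_splits)
    finally show ?thesis .
  qed
qed

function gfun :: "var set \<Rightarrow> (var \<Rightarrow> real) \<Rightarrow> int \<Rightarrow> var \<Rightarrow> real \<Rightarrow> int \<Rightarrow> real" where
  "gfun A x v a0 c r = (if r \<le> v then 0 else
     (\<Sum>a\<in>{a\<in>A. vhd a = r}. (if vtl a < v then c else if vtl a = v then (if a = a0 then 1 else 0)
        else if vtl a < r then gfun A x v a0 c (vtl a) else 0) * x a) / inS A x r)"
  by pat_completeness auto
termination by (relation "Wellfounded.measure (\<lambda>(A,x,v,a0,c,r). nat (r - v))") auto

declare gfun.simps[simp del]

definition wfun :: "var set \<Rightarrow> (var \<Rightarrow> real) \<Rightarrow> int \<Rightarrow> var \<Rightarrow> real \<Rightarrow> var \<Rightarrow> real" where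
  "wfun A x v a0 c a = (if vtl a < v then c else if vtl a = v then (if a = a0 then 1 else 0)
        else gfun A x v a0 c (vtl a))"

lemma gfun_eq:
  assumes arcs: "\<And>a. a \<in> A \<Longrightarrow> vtl a < vhd a" and r: "v < r"
  shows "gfun A x v e c r = inS A (\<lambda>a. wfun A x v e c a * x a) r / inS A x r"
proof -
  have "gfun A x v e c r = (\<Sum>a\<in>{a\<in>A. vhd a = r}. (if vtl a < v then c else if vtl a = v then (if a = e then 1 else 0)
        else if vtl a < r then gfun A x v e c (vtl a) else 0) * x a) / inS A x r"
    using r by (subst gfun.simps) simp
  also have "(\<Sum>a\<in>{a\<in>A. vhd a = r}. (if vtl a < v then c else if vtl a = v then (if a = e then 1 else 0)
        else if vtl a < r then gfun A x v e c (vtl a) else 0) * x a) = inS A (\<lambda>a. wfun A x v e c a * x a) r"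
    unfolding inS_def by (rule sum.cong) (use arcs in \<open>auto simp: wfun_def\<close>)
  finally show ?thesis .
qed

lemma gfun_bounds:
  assumes fin: "finite A" and arcs: "\<And>a. a \<in> A \<Longrightarrow> vtl a < vhd a"
    and nn: "\<And>a. a \<in> A \<Longrightarrow> 0 \<le> x a" and c: "0 \<le> c" "c \<le> 1"
  shows "0 \<le> gfun A x v a0 c r \<and> gfun A x v a0 c r \<le> 1"
proof (induction "nat (r - v)" arbitrary: r rule: less_induct)
  case less
  show ?case
  proof (cases "r \<le> v")
    case True then show ?thesis by (simp add: gfun.simps)
  next
    case False
    have wb: "0 \<le> wfun A x v a0 c a \<and> wfun A x v a0 c a \<le> 1" if "a \<in> A" "vhd a = r" for a
    proof -
      have "vtl a < r" using arcs that by auto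
      then show ?thesis using less[of "vtl a"] c by (auto simp: wfun_def)
    qed
    define N where "N = inS A (\<lambda>a. wfun A x v a0 c a * x a) r"
    have N0: "0 \<le> N" unfolding N_def inS_def
      by (rule sum_nonneg) (use wb nn in auto)
    have ND: "N \<le> inS A x r" unfolding N_def inS_def
      by (rule sum_mono) (use wb nn in \<open>auto intro: mult_left_le_one_le\<close>)
    have "gfun A x v a0 c r = N / inS A x r" using gfun_eq[OF arcs] False by (simp add: N_def)
    then show ?thesis using N0 ND by (auto simp: divide_le_eq_1)
  qed
qed




lemma outS_sub: "outS A (\<lambda>a. (1 - w a) * x a) r = outS A x r - outS A (\<lambda>a. w a * x a) r"
  unfolding outS_def by (simp add: sum_subtractf[symmetric] algebra_simps)
lemma inS_sub: "inS A (\<lambda>a. (1 - w a) * x a) r = inS A x r - inS A (\<lambda>a. w a * x a) r"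
  unfolding inS_def by (simp add: sum_subtractf[symmetric] algebra_simps)

lemma split_lemma:
  assumes fin: "finite A" and arcs: "\<And>a. a \<in> A \<Longrightarrow> vtl a < vhd a \<and> 0 \<le> vtl a"
    and nn: "\<And>a. a \<in> A \<Longrightarrow> 0 \<le> x a"
    and fle: "\<And>r. outS A x r \<le> inS A x r + (if r = 0 then 1 else 0)"
    and feq: "\<And>r. r \<in> Eq \<Longrightarrow> outS A x r = inS A x r + (if r = 0 then 1 else 0)"
    and Eq0: "0 \<in> Eq"
    and a0: "a0 \<in> A" and v: "vtl a0 = v" and xa0: "0 < x a0" "x a0 < inS A x v + (if v = 0 then 1 else 0)"
    and c_def: "c = x a0 / (inS A x v + (if v = 0 then 1 else 0))"
    and w_def: "w = wfun A x v a0 c"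
  shows "\<forall>a. 0 \<le> w a \<and> w a \<le> 1" and "w a0 = 1" and "0 < c" and "c < 1"
    and "\<forall>r. r \<noteq> 0 \<longrightarrow> outS A (\<lambda>a. w a * x a) r \<le> inS A (\<lambda>a. w a * x a) r \<and>
              outS A (\<lambda>a. (1 - w a) * x a) r \<le> inS A (\<lambda>a. (1 - w a) * x a) r"
    and "\<forall>r\<in>Eq. r \<noteq> 0 \<longrightarrow> outS A (\<lambda>a. w a * x a) r = inS A (\<lambda>a. w a * x a) r \<and>
              outS A (\<lambda>a. (1 - w a) * x a) r = inS A (\<lambda>a. (1 - w a) * x a) r"
    and "outS A (\<lambda>a. w a * x a) 0 = c * outS A x 0"
proof -
  define I where "I r = inS A x r + (if r = 0 then 1 else 0)" for r
  have Ipos: "I v > 0" using xa0 by (simp add: I_def)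
  show c0: "0 < c" using xa0 Ipos by (simp add: c_def I_def[symmetric])
  show c1: "c < 1" using xa0 Ipos by (simp add: c_def I_def[symmetric])
  have cI: "c * I v = x a0" using Ipos by (simp add: c_def I_def)
  have arcs1: "\<And>a. a \<in> A \<Longrightarrow> vtl a < vhd a" using arcs by blast
  have gb: "0 \<le> gfun A x v a0 c r \<and> gfun A x v a0 c r \<le> 1" for r
    by (rule gfun_bounds[OF fin arcs1 nn]) (use c0 c1 in auto)
  show wb: "\<forall>a. 0 \<le> w a \<and> w a \<le> 1" using gb c0 c1 by (auto simp: w_def wfun_def)
  show "w a0 = 1" using v by (simp add: w_def wfun_def)
  let ?h = "\<lambda>a. w a * x a"
  have v0: "0 \<le> v" using arcs[OF a0] v by auto
  have out_lt: "outS A ?h r = c * outS A x r" if "r < v" for r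
    unfolding outS_def sum_distrib_left by (rule sum.cong) (use that in \<open>auto simp: w_def wfun_def\<close>)
  have in_le: "inS A ?h r = c * inS A x r" if "r \<le> v" for r
    unfolding inS_def sum_distrib_left
  proof (rule sum.cong)
    fix a assume a: "a \<in> {a\<in>A. vhd a = r}"
    then have "vtl a < v" using arcs1[of a] that by auto
    then show "w a * x a = c * x a" by (simp add: w_def wfun_def)
  qed simp
  have out_gt: "outS A ?h r = gfun A x v a0 c r * outS A x r" if "v < r" for r
    unfolding outS_def sum_distrib_left by (rule sum.cong) (use that in \<open>auto simp: w_def wfun_def\<close>)
  have in_gt: "inS A ?h r = gfun A x v a0 c r * inS A x r" if "v < r" for r
  proof (cases "inS A x r = 0")
    case True
    have "0 \<le> inS A ?h r" unfolding inS_def by (rule sum_nonneg) (use wb nn in auto)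
    moreover have "inS A ?h r \<le> inS A x r" unfolding inS_def
      by (rule sum_mono) (use wb nn in \<open>auto intro: mult_left_le_one_le\<close>)
    ultimately show ?thesis using True by simp
  next
    case False
    then show ?thesis using gfun_eq[OF arcs1 that, where x=x and e=a0 and c=c] by (simp add: w_def)
  qed
  have out_eq: "outS A ?h v = x a0"
  proof -
    have "outS A ?h v = (\<Sum>a\<in>{a \<in> A. vtl a = v}. if a = a0 then x a else 0)"
      unfolding outS_def by (rule sum.cong) (auto simp: w_def wfun_def)
    also have "\<dots> = x a0" using fin a0 v by (simp add: sum.delta')
    finally show ?thesis .
  qed
  have main: "outS A ?h r \<le> inS A ?h r \<and> outS A x r - outS A ?h r \<le> inS A x r - inS A ?h r \<and>
      (r \<in> Eq \<longrightarrow> outS A ?h r = inS A ?h r \<and> outS A x r - outS A ?h r = inS A x r - inS A ?h r)" if r0: "r \<noteq> 0" for r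
  proof -
    have Ir: "I r = inS A x r" using r0 by (simp add: I_def)
    have le: "outS A x r \<le> inS A x r" using fle[of r] r0 by simp
    have eqr: "r \<in> Eq \<Longrightarrow> outS A x r = inS A x r" using feq[of r] r0 by simp
    consider "r < v" | "r = v" | "v < r" by linarith
    then show ?thesis
    proof cases
      case 1
      have "c * outS A x r \<le> c * inS A x r" using le c0 by (intro mult_left_mono) auto
      moreover have "(1 - c) * outS A x r \<le> (1 - c) * inS A x r" using le c1 by (intro mult_left_mono) auto
      ultimately show ?thesis using out_lt[OF 1] in_le[of r] 1 eqr by (simp add: algebra_simps)
    next
      case 2
      have "inS A ?h r = x a0" using in_le[of r] 2 cI Ir by simp
      then show ?thesis using out_eq 2 le eqr by simp
    next
      case 3
      define g where "g = gfun A x v a0 c r"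
      have "g * outS A x r \<le> g * inS A x r" using le gb[of r] by (intro mult_left_mono) (auto simp: g_def)
      moreover have "(1 - g) * outS A x r \<le> (1 - g) * inS A x r" using le gb[of r] by (intro mult_left_mono) (auto simp: g_def)
      ultimately show ?thesis using out_gt[OF 3] in_gt[OF 3] eqr by (simp add: g_def algebra_simps)
    qed
  qed
  show "\<forall>r. r \<noteq> 0 \<longrightarrow> outS A ?h r \<le> inS A ?h r \<and>
              outS A (\<lambda>a. (1 - w a) * x a) r \<le> inS A (\<lambda>a. (1 - w a) * x a) r"
    using main by (simp add: outS_sub inS_sub)
  show "\<forall>r\<in>Eq. r \<noteq> 0 \<longrightarrow> outS A ?h r = inS A ?h r \<and>
              outS A (\<lambda>a. (1 - w a) * x a) r = inS A (\<lambda>a. (1 - w a) * x a) r"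
  proof (intro ballI impI)
    fix r assume r: "r \<in> Eq" "r \<noteq> 0"
    have "outS A ?h r = inS A ?h r" "outS A x r - outS A ?h r = inS A x r - inS A ?h r"
      using main[OF r(2)] r(1) by auto
    then show "outS A ?h r = inS A ?h r \<and> outS A (\<lambda>a. (1 - w a) * x a) r = inS A (\<lambda>a. (1 - w a) * x a) r"
      unfolding outS_sub inS_sub by simp
  qed
  show "outS A ?h 0 = c * outS A x 0"
  proof (cases "v = 0")
    case True
    have "outS A x 0 = I 0" using feq[OF Eq0] by (simp add: I_def)
    then show ?thesis using out_eq True cI by simp
  next
    case False
    then show ?thesis using out_lt[of 0] v0 by simp
  qed
qed




lemma sum_Nats: "(\<And>a. a \<in> S \<Longrightarrow> f a \<in> \<nat>) \<Longrightarrow> sum f S \<in> (\<nat> :: real set)"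
  by (induct S rule: infinite_finite_induct) auto

lemma Nats01: "(n::real) \<in> \<nat> \<Longrightarrow> n \<le> 1 \<Longrightarrow> n \<in> {0,1}"
proof -
  assume "n \<in> \<nat>" "n \<le> 1"
  then obtain m where m: "n = of_nat m" by (auto elim: Nats_cases)
  with \<open>n \<le> 1\<close> have "m \<le> 1" by simp
  then have "m = 0 \<or> m = 1" by auto
  then show ?thesis using m by auto
qed

lemma wt_arc: "isarc T L l a \<Longrightarrow> wt T L l w x a = w a * x a"
  by (cases a) (auto simp: wt_def)

lemma nn_arcs: "x \<in> Hc T L l Clo Cup Vbar V \<Longrightarrow> a \<in> Arcs T L l \<Longrightarrow> 0 \<le> x a"
  by (cases a) (auto simp: Arcs_def Hc_nn)

lemma flow_x:
  assumes L1: "L \<ge> 1" and l1: "l \<ge> 1" and xH: "x \<in> Hc T L l Clo Cup Vbar V" and s1: "SA T x = 1"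
  shows "outS (Arcs T L l) x r \<le> inS (Arcs T L l) x r + (if r = 0 then 1 else 0)"
    and "even r \<Longrightarrow> outS (Arcs T L l) x r = inS (Arcs T L l) x r + (if r = 0 then 1 else 0)"
proof -
  have inn: "0 \<le> inS (Arcs T L l) x r'" for r'
    unfolding inS_def by (rule sum_nonneg) (use nn_arcs[OF xH] in auto)
  have ev: "outS (Arcs T L l) x (2*t) = inS (Arcs T L l) x (2*t) + (if 2*t = 0 then 1 else 0)" for t
  proof -
    consider "t = 0" | "1 \<le> t \<and> t \<le> T" | "t \<noteq> 0 \<and> \<not> (1 \<le> t \<and> t \<le> T)" by linarith
    then show ?thesis
    proof cases
      case 1 then show ?thesis using out_0[OF L1 l1, of T x] in_0[OF L1 l1, of T x] s1 by (simp add: SA_def)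
    next
      case 2 then show ?thesis using out_S[OF L1 l1, of t T x] in_S[OF L1 l1, of t T x] Hc_S[OF xH, of t] by simp
    next
      case 3 then show ?thesis using out_S_else[OF L1 l1, of t T x] in_S_else[OF L1 l1, of t T x] by simp
    qed
  qed
  have od: "outS (Arcs T L l) x (2*t+1) \<le> inS (Arcs T L l) x (2*t+1)" for t
  proof (cases "L \<le> t \<and> t \<le> T-l-1")
    case True then show ?thesis using out_E[OF L1 l1, of t T x] in_E[OF L1 l1, of t T x] Hc_E[OF xH, of t] l1 by simp
  next
    case False then show ?thesis using out_E_else[OF L1 l1, of t T x] inn by simp
  qed
  obtain t where "r = 2*t \<or> r = 2*t+1" by (metis oddE evenE)
  then show "outS (Arcs T L l) x r \<le> inS (Arcs T L l) x r + (if r = 0 then 1 else 0)"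
  proof (elim disjE)
    assume r: "r = 2*t" then show ?thesis using ev[of t] by simp
  next
    assume "r = 2*t+1" then show ?thesis using od[of t] by (simp add: par3)
  qed
  show "even r \<Longrightarrow> outS (Arcs T L l) x r = inS (Arcs T L l) x r + (if r = 0 then 1 else 0)"
  proof -
    assume "even r" then obtain t where "r = 2*t" by (auto elim: evenE)
    then show ?thesis using ev[of t] by simp
  qed
qed




theorem lemma1:
  fixes T L l :: int and Clo Cup Vbar V :: real and x :: "var \<Rightarrow> real"
  assumes "T \<ge> 1" and "L \<ge> 1" and "l \<ge> 1"
    and "is_extreme_point x (polyP T L l Clo Cup Vbar V)"
  shows "(\<forall>t. x (Alpha t) \<in> {0,1}) \<and> (\<forall>t k. x (Beta t k) \<in> {0,1}) \<and>
         (\<forall>t k. x (Gamma t k) \<in> {0,1}) \<and> (\<forall>t. x (Theta t) \<in> {0,1})"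
proof -
  note ex = assms(4)
  have L1: "L \<ge> 1" and l1: "l \<ge> 1" using assms by auto
  have xP: "x \<in> polyP T L l Clo Cup Vbar V" using ex by (simp add: is_extreme_point_def)
  then have xH: "x \<in> Hc T L l Clo Cup Vbar V" by (simp add: polyP_iff)
  show ?thesis
  proof (cases "\<forall>v. x v = 0")
    case True then show ?thesis by simp
  next
    case False
    then have s1: "SA T x = 1" using extreme_scale[OF ex] by blast
    have fin: "finite (Arcs T L l)" using finite_Arcs[OF L1 l1] .
    have arcs: "\<And>a. a \<in> Arcs T L l \<Longrightarrow> vtl a < vhd a \<and> 0 \<le> vtl a" using Arcs_prop[OF L1 l1] .
    have nn: "\<And>a. a \<in> Arcs T L l \<Longrightarrow> 0 \<le> x a" using nn_arcs[OF xH] .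
    have fle: "\<And>r. outS (Arcs T L l) x r \<le> inS (Arcs T L l) x r + (if r = 0 then 1 else 0)"
      using flow_x(1)[OF L1 l1 xH s1] .
    have feq: "\<And>r. r \<in> {r. even r} \<Longrightarrow> outS (Arcs T L l) x r = inS (Arcs T L l) x r + (if r = 0 then 1 else 0)"
      using flow_x(2)[OF L1 l1 xH s1] by simp
    have Eq0: "(0::int) \<in> {r. even r}" by simp
    define I where "I r = inS (Arcs T L l) x r + (if r = 0 then 1 else 0)" for r
    have SA_out: "SA T h = outS (Arcs T L l) h 0" for h
      unfolding SA_def using out_0[OF L1 l1, of T h] by simp

    have nosplit: "\<not> (0 < x a0 \<and> x a0 < I (vtl a0))" if a0: "a0 \<in> Arcs T L l" for a0
    proof
      assume H: "0 < x a0 \<and> x a0 < I (vtl a0)"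
      define v where "v = vtl a0"
      define c where "c = x a0 / (inS (Arcs T L l) x v + (if v = 0 then 1 else 0))"
      define w where "w = wfun (Arcs T L l) x v a0 c"
      have xa0: "0 < x a0" "x a0 < inS (Arcs T L l) x v + (if v = 0 then 1 else 0)"
        using H by (simp_all add: I_def v_def)
      note S = split_lemma[OF fin arcs nn fle feq Eq0 a0 v_def[symmetric] xa0 c_def w_def]
      have wb: "\<And>a. 0 \<le> w a \<and> w a \<le> 1" using S(1) by blast
      have y: "wt T L l w x \<in> Hc T L l Clo Cup Vbar V"
      proof (rule wt_Hc_abs[OF L1 l1 xH])
        show "\<And>v. 0 \<le> w v" using wb by blast
      next
        fix t :: int assume "1 \<le> t" "t \<le> T"
        then show "outS (Arcs T L l) (\<lambda>a. w a * x a) (2*t) = inS (Arcs T L l) (\<lambda>a. w a * x a) (2*t)"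
          using S(6)[rule_format, of "2*t"] by simp
      next
        fix t :: int assume "L \<le> t" "t \<le> T-l-1"
        then show "outS (Arcs T L l) (\<lambda>a. w a * x a) (2*t+1) \<le> inS (Arcs T L l) (\<lambda>a. w a * x a) (2*t+1)"
          using S(5)[rule_format, of "2*t+1"] by (simp add: par3)
      qed
      have z: "wt T L l (\<lambda>v. 1 - w v) x \<in> Hc T L l Clo Cup Vbar V"
      proof (rule wt_Hc_abs[OF L1 l1 xH])
        show "\<And>v. 0 \<le> 1 - w v" using wb by simp
      next
        fix t :: int assume "1 \<le> t" "t \<le> T"
        then show "outS (Arcs T L l) (\<lambda>a. (1 - w a) * x a) (2*t) = inS (Arcs T L l) (\<lambda>a. (1 - w a) * x a) (2*t)"
          using S(6)[rule_format, of "2*t"] by simp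
      next
        fix t :: int assume "L \<le> t" "t \<le> T-l-1"
        then show "outS (Arcs T L l) (\<lambda>a. (1 - w a) * x a) (2*t+1) \<le> inS (Arcs T L l) (\<lambda>a. (1 - w a) * x a) (2*t+1)"
          using S(5)[rule_format, of "2*t+1"] by (simp add: par3)
      qed
      have xyz: "x u = wt T L l w x u + wt T L l (\<lambda>v. 1 - w v) x u" for u
        using wt_compl[OF xH, of u w] by linarith
      obtain \<mu> where mu: "\<forall>u. wt T L l w x u = \<mu> * x u" using extreme_decomp[OF ex y z xyz] by blast
      have "SA T (wt T L l w x) = outS (Arcs T L l) (\<lambda>a. w a * x a) 0"
        unfolding SA_out outS_def by (rule sum.cong) (auto simp: Arcs_def wt_arc)
      also have "\<dots> = c * SA T x" using S(7) SA_out[of x] by simp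
      finally have e1: "SA T (wt T L l w x) = c" using s1 by simp
      have "SA T (wt T L l w x) = \<mu> * SA T x" unfolding SA_def using mu by (simp add: sum_distrib_left)
      with e1 s1 have muc: "\<mu> = c" by simp
      have "wt T L l w x a0 = x a0" using wt_arc[of T L l a0 w x] a0 S(2) by (simp add: Arcs_def)
      with mu muc have "x a0 = c * x a0" by simp
      then have "c = 1" using xa0(1) by simp
      with S(4) show False by simp
    qed

    have dang: "x (Beta t k) = 0" if "\<not> isarc T L l (Beta t k)" for t k
    proof -
      define w where "w = (\<lambda>v. if v = Beta t k then (1::real) else 0)"
      have w_nn: "\<And>v. 0 \<le> w v" by (simp add: w_def)
      have hz: "w a * x a = 0" if "a \<in> Arcs T L l" for a
        using that \<open>\<not> isarc T L l (Beta t k)\<close> by (auto simp: w_def Arcs_def)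
      have hx: "(1 - w a) * x a = x a" if "a \<in> Arcs T L l" for a
        using that \<open>\<not> isarc T L l (Beta t k)\<close> by (auto simp: w_def Arcs_def)
      have outz: "outS (Arcs T L l) (\<lambda>a. w a * x a) r = 0" for r
        unfolding outS_def by (rule sum.neutral) (use hz in auto)
      have inz: "inS (Arcs T L l) (\<lambda>a. w a * x a) r = 0" for r
        unfolding inS_def by (rule sum.neutral) (use hz in auto)
      have outx: "outS (Arcs T L l) (\<lambda>a. (1 - w a) * x a) r = outS (Arcs T L l) x r" for r
        unfolding outS_def by (rule sum.cong) (use hx in auto)
      have inx: "inS (Arcs T L l) (\<lambda>a. (1 - w a) * x a) r = inS (Arcs T L l) x r" for r
        unfolding inS_def by (rule sum.cong) (use hx in auto)
      have y: "wt T L l w x \<in> Hc T L l Clo Cup Vbar V"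
        by (rule wt_Hc_abs[OF L1 l1 xH]) (simp_all add: outz inz w_nn)
      have z: "wt T L l (\<lambda>v. 1 - w v) x \<in> Hc T L l Clo Cup Vbar V"
      proof (rule wt_Hc_abs[OF L1 l1 xH])
        show "\<And>v. 0 \<le> 1 - w v" by (simp add: w_def)
      next
        fix t :: int assume "1 \<le> t" "t \<le> T"
        then show "outS (Arcs T L l) (\<lambda>a. (1 - w a) * x a) (2*t) = inS (Arcs T L l) (\<lambda>a. (1 - w a) * x a) (2*t)"
          using feq[of "2*t"] by (simp add: outx inx)
      next
        fix t :: int assume "L \<le> t" "t \<le> T-l-1"
        then show "outS (Arcs T L l) (\<lambda>a. (1 - w a) * x a) (2*t+1) \<le> inS (Arcs T L l) (\<lambda>a. (1 - w a) * x a) (2*t+1)"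
          using fle[of "2*t+1"] by (simp add: outx inx par3)
      qed
      have xyz: "x u = wt T L l w x u + wt T L l (\<lambda>v. 1 - w v) x u" for u
        using wt_compl[OF xH, of u w] by linarith
      obtain \<mu> where mu: "\<forall>u. wt T L l w x u = \<mu> * x u" using extreme_decomp[OF ex y z xyz] by blast
      have "SA T (wt T L l w x) = 0" unfolding SA_def by (simp add: wt_def w_def)
      moreover have "SA T (wt T L l w x) = \<mu> * SA T x" unfolding SA_def using mu by (simp add: sum_distrib_left)
      ultimately have "\<mu> = 0" using s1 by simp
      then have "wt T L l w x (Beta t k) = 0" using mu by simp
      then show ?thesis by (simp add: wt_def w_def)
    qed

    have x01: "x a = 0 \<or> x a = I (vtl a)" if a: "a \<in> Arcs T L l" for a
    proof -
      have "x a \<le> outS (Arcs T L l) x (vtl a)" unfolding outS_def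
        by (rule member_le_sum) (use a nn fin in auto)
      also have "\<dots> \<le> I (vtl a)" using fle by (simp add: I_def)
      finally show ?thesis using nosplit[OF a] nn[OF a] by linarith
    qed
    have I01: "I r \<in> {0,1}" for r
    proof (induction "nat r" arbitrary: r rule: less_induct)
      case less
      consider "r = 0" | "r < 0" | "r > 0" by linarith
      then show ?case
      proof cases
        case 1 then show ?thesis using in_0[OF L1 l1, of T x] by (simp add: I_def)
      next
        case 2
        have "inS (Arcs T L l) x r = 0" unfolding inS_def
          by (rule sum.neutral) (use arcs 2 in force)
        then show ?thesis using 2 by (simp add: I_def)
      next
        case 3
        have nat: "x a \<in> \<nat>" if "a \<in> {a \<in> Arcs T L l. vhd a = r}" for a
        proof -
          have "vtl a < r" "0 \<le> vtl a" using arcs that by auto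
          then have "I (vtl a) \<in> {0,1}" using less[of "vtl a"] by simp
          then show ?thesis using x01[of a] that by auto
        qed
        have "inS (Arcs T L l) x r \<in> \<nat>" unfolding inS_def by (rule sum_Nats) (use nat in auto)
        moreover have "inS (Arcs T L l) x r \<le> 1" by (rule cut_bound[OF fin arcs nn fle])
        ultimately show ?thesis using 3 Nats01 by (simp add: I_def)
      qed
    qed
    have arc01: "x a \<in> {0,1}" if "a \<in> Arcs T L l" for a
      using x01[OF that] I01[of "vtl a"] by auto
    have "x (Alpha t) \<in> {0,1}" for t
      using arc01[of "Alpha t"] Hc_valid[OF xH, of "Alpha t"] by (auto simp: Arcs_def)
    moreover have "x (Beta t k) \<in> {0,1}" for t k
      using arc01[of "Beta t k"] dang[of t k] by (auto simp: Arcs_def)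
    moreover have "x (Gamma t k) \<in> {0,1}" for t k
      using arc01[of "Gamma t k"] Hc_valid[OF xH, of "Gamma t k"] by (auto simp: Arcs_def)
    moreover have "x (Theta t) \<in> {0,1}" for t
    proof (cases "T - l \<le> t \<and> t \<le> T")
      case True
      then have "x (Theta t) = (\<Sum>k=1..t-L+1. x (Beta k t))" using Hc_Th[OF xH, of t] by simp
      also have "\<dots> = inS (Arcs T L l) x (2*t+1)" using in_E[OF L1 l1, of t T x] True by simp
      also have "\<dots> = I (2*t+1)" by (simp add: I_def par3)
      finally show ?thesis using I01 by simp
    next
      case False then show ?thesis using Hc_valid[OF xH, of "Theta t"] by simp
    qed
    ultimately show ?thesis by blast
  qed
qed


end
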